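(* Let $(A,G)$ be an admissible pair with $A\in M_{Q_0}(\mathbb Z)$, and assume that $G$ has at most one non-trivial orbit in $Q_0$. Then $(A,G)$ is a stable admissible pair.
   Context: $Q_0$ finite; $A=(a_{ij})$ skew-symmetrizable ($DA$ skew-symmetric for a positive integer diagonal $D$). Mutation $\mu_k(B)=(b'_{ij})$: $b'_{ij}=-b_{ij}$ if $k\in\{i,j\}$, else $b_{ij}+\tfrac12(|b_{ik}|b_{kj}+b_{ik}|b_{kj}|)$. A permutation $g$ of $Q_0$ is an automorphism of $B$ if $b_{gi,gj}=b_{ij}$; a group $G$ of automorphisms of $B$ is admissible ($(B,G)$ an admissible pair) if for distinct $i,j$ in the same $G$-orbit there is no path of length $1$ or $2$ from $i$ to $j$ in the quiver of $B$ ($b_{ij}\le0$ and no $k$ with $b_{ik}>0$, $b_{kj}>0$). For a $G$-orbit $\mathbf i$, $\mu^G_{\mathbf i}=\prod_{j\in\mathbf i}\mu_j$. $(A,G)$ is stable if for every finite sequence of $G$-orbits $\mathbf i_1,\ldots,\mathbf i_n$, each pair $(\mu^G_{\mathbf i_m}\circ\cdots\circ\mu^G_{\mathbf i_1}(A),G)$, $1\le m\le n$, is admissible. *)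

theory Defs
  imports "HOL-Combinatorics.Permutations"
begin

text \<open>Exchange matrices are integer matrices indexed by the finite vertex set Q0,
  represented as functions; entries outside Q0 are irrelevant.\<close>

type_synonym 'a mat = "'a \<Rightarrow> 'a \<Rightarrow> int"

definition skew_symmetrizable :: "'a set \<Rightarrow> 'a mat \<Rightarrow> bool" where
  "skew_symmetrizable Q0 A \<longleftrightarrow>
     (\<exists>D :: 'a \<Rightarrow> int. (\<forall>i\<in>Q0. D i > 0) \<and>
        (\<forall>i\<in>Q0. \<forall>j\<in>Q0. D i * A i j = - (D j * A j i)))"

text \<open>Matrix mutation at k. The quantity |b_ik| b_kj + b_ik |b_kj| is always even.\<close>
definition mut :: "'a \<Rightarrow> 'a mat \<Rightarrow> 'a mat" where
  "mut k B = (\<lambda>i j. if i = k \<or> j = k then - B i j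
      else B i j + (\<bar>B i k\<bar> * B k j + B i k * \<bar>B k j\<bar>) div 2)"

definition is_automorphism :: "'a set \<Rightarrow> 'a mat \<Rightarrow> ('a \<Rightarrow> 'a) \<Rightarrow> bool" where
  "is_automorphism Q0 B g \<longleftrightarrow> g permutes Q0 \<and> (\<forall>i\<in>Q0. \<forall>j\<in>Q0. B (g i) (g j) = B i j)"

definition perm_group :: "'a set \<Rightarrow> ('a \<Rightarrow> 'a) set \<Rightarrow> bool" where
  "perm_group Q0 G \<longleftrightarrow> id \<in> G \<and> (\<forall>g\<in>G. g permutes Q0) \<and>
     (\<forall>g\<in>G. \<forall>h\<in>G. g \<circ> h \<in> G) \<and> (\<forall>g\<in>G. inv g \<in> G)"

definition orbit :: "('a \<Rightarrow> 'a) set \<Rightarrow> 'a \<Rightarrow> 'a set" where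
  "orbit G i = (\<lambda>g. g i) ` G"

definition admissible :: "'a set \<Rightarrow> 'a mat \<Rightarrow> ('a \<Rightarrow> 'a) set \<Rightarrow> bool" where
  "admissible Q0 B G \<longleftrightarrow>
     (\<forall>g\<in>G. is_automorphism Q0 B g) \<and>
     (\<forall>i\<in>Q0. \<forall>j\<in>orbit G i. i \<noteq> j \<longrightarrow>
        B i j \<le> 0 \<and> \<not> (\<exists>k\<in>Q0. B i k > 0 \<and> B k j > 0))"

text \<open>Orbit mutation: product of mutations at all vertices of the orbit
  (performed in increasing order; the order is irrelevant for admissible pairs).\<close>
definition orbit_mut :: "'a::linorder set \<Rightarrow> 'a mat \<Rightarrow> 'a mat" where
  "orbit_mut I B = fold mut (sorted_list_of_set I) B"

definition orbit_mut_seq :: "('a::linorder \<Rightarrow> 'a) set \<Rightarrow> 'a list \<Rightarrow> 'a mat \<Rightarrow> 'a mat" where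
  "orbit_mut_seq G is B = fold (\<lambda>i C. orbit_mut (orbit G i) C) is B"

definition stable :: "'a::linorder set \<Rightarrow> 'a mat \<Rightarrow> ('a \<Rightarrow> 'a) set \<Rightarrow> bool" where
  "stable Q0 A G \<longleftrightarrow>
     (\<forall>is. set is \<subseteq> Q0 \<longrightarrow> admissible Q0 (orbit_mut_seq G is A) G)"

end

theory Submission
  imports Defs
begin

definition ff :: "int \<Rightarrow> int \<Rightarrow> int" where
  "ff a b = (\<bar>a\<bar> * b + a * \<bar>b\<bar>) div 2"

lemma ff_cases: "ff a b = (if a > 0 \<and> b > 0 then a * b else if a < 0 \<and> b < 0 then - (a * b) else 0)"
proof -
  consider "a > 0 \<and> b > 0" | "a < 0 \<and> b < 0" | "\<not> (a > 0 \<and> b > 0) \<and> \<not> (a < 0 \<and> b < 0)" by blast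
  then show ?thesis
  proof cases
    case 1 then have "\<bar>a\<bar> * b + a * \<bar>b\<bar> = 2 * (a*b)" by simp
    then show ?thesis using 1 unfolding ff_def by simp
  next
    case 2 then have "\<bar>a\<bar> * b + a * \<bar>b\<bar> = 2 * (-(a*b))" by simp
    then show ?thesis using 2 unfolding ff_def by simp
  next
    case 3 then have "a \<ge> 0 \<and> b \<le> 0 \<or> a \<le> 0 \<and> b \<ge> 0" by linarith
    then have "\<bar>a\<bar> * b + a * \<bar>b\<bar> = 0" by (auto simp: abs_of_nonneg abs_of_nonpos)
    then have "ff a b = 0" unfolding ff_def by simp
    then show ?thesis using 3 by simp
  qed
qed

lemma ff_0 [simp]: "ff a 0 = 0" "ff 0 b = 0" by (simp_all add: ff_def)

lemma mut_ff: "mut k B i j = (if i = k \<or> j = k then - B i j else B i j + ff (B i k) (B k j))"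
  by (simp add: mut_def ff_def)

lemma sign_opp:
  fixes x y a b :: int
  assumes "x > 0" "y > 0" "x * a = - (y * b)"
  shows "(a > 0 \<longleftrightarrow> b < 0) \<and> (a < 0 \<longleftrightarrow> b > 0)"
proof -
  have "x * a > 0 \<longleftrightarrow> a > 0" using assms(1) by (simp add: zero_less_mult_iff)
  moreover have "x * a < 0 \<longleftrightarrow> a < 0" using assms(1) by (simp add: mult_less_0_iff)
  moreover have "y * b > 0 \<longleftrightarrow> b > 0" using assms(2) by (simp add: zero_less_mult_iff)
  moreover have "y * b < 0 \<longleftrightarrow> b < 0" using assms(2) by (simp add: mult_less_0_iff)
  ultimately show ?thesis using assms(3) by linarith
qed

lemma ff_opp:
  fixes x y a b :: int
  assumes "x > 0" "y > 0" "x * a = - (y * b)"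
  shows "ff a b = 0"
  using sign_opp[OF assms] by (auto simp: ff_cases)

definition skewD :: "'a set \<Rightarrow> ('a \<Rightarrow> int) \<Rightarrow> 'a mat \<Rightarrow> bool" where
  "skewD Q0 D B \<longleftrightarrow> (\<forall>i\<in>Q0. \<forall>j\<in>Q0. D i * B i j = - (D j * B j i))"

lemma skewD_app: "skewD Q0 D B \<Longrightarrow> i \<in> Q0 \<Longrightarrow> j \<in> Q0 \<Longrightarrow> D i * B i j = - (D j * B j i)"
  unfolding skewD_def by blast

lemma prod_ident:
  fixes di dj dk a b c d :: int
  assumes "dk > 0" "di * a = - (dk * d)" "dk * b = - (dj * c)"
  shows "di * (a * b) = dj * (c * d)"
proof -
  have "dk * (di * (a * b)) = (di * a) * (dk * b)" by (simp add: algebra_simps)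
  also have "\<dots> = (dk * d) * (dj * c)" using assms by simp
  also have "\<dots> = dk * (dj * (c * d))" by (simp add: algebra_simps)
  finally show ?thesis using assms(1) by simp
qed

lemma skew_mut:
  assumes pos: "\<forall>i\<in>Q0. D i > 0" and sk: "skewD Q0 D B" and k: "k \<in> Q0"
  shows "skewD Q0 D (mut k B)"
  unfolding skewD_def
proof (intro ballI)
  fix i j assume i: "i \<in> Q0" and j: "j \<in> Q0"
  show "D i * mut k B i j = - (D j * mut k B j i)"
  proof (cases "i = k \<or> j = k")
    case True
    then have "mut k B i j = - B i j" "mut k B j i = - B j i" by (auto simp: mut_ff)
    then show ?thesis using skewD_app[OF sk i j] by simp
  next
    case False
    define a b c d where "a = B i k" "b = B k j" "c = B j k" "d = B k i"
    have e1: "D i * a = - (D k * d)" using skewD_app[OF sk i k] unfolding a_b_c_d_def .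
    have e2: "D k * b = - (D j * c)" using skewD_app[OF sk k j] unfolding a_b_c_d_def .
    have e2': "D j * c = - (D k * b)" using e2 by simp
    have Di: "D i > 0" "D j > 0" "D k > 0" using pos i j k by auto
    have s1: "(a > 0 \<longleftrightarrow> d < 0) \<and> (a < 0 \<longleftrightarrow> d > 0)" using sign_opp[OF Di(1) Di(3) e1] .
    have s2: "(c > 0 \<longleftrightarrow> b < 0) \<and> (c < 0 \<longleftrightarrow> b > 0)" using sign_opp[OF Di(2) Di(3) e2'] .
    have pid: "D i * (a * b) = D j * (c * d)" using prod_ident[OF Di(3) e1 e2] .
    have "D i * ff a b = - (D j * ff c d)"
    proof -
      consider "a > 0 \<and> b > 0" | "a < 0 \<and> b < 0" | "\<not> (a > 0 \<and> b > 0) \<and> \<not> (a < 0 \<and> b < 0)" by blast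
      then show ?thesis
      proof cases
        case 1
        then have "c < 0 \<and> d < 0" using s1 s2 by blast
        then show ?thesis using 1 pid by (simp add: ff_cases)
      next
        case 2
        then have "c > 0 \<and> d > 0" using s1 s2 by blast
        then show ?thesis using 2 pid by (simp add: ff_cases)
      next
        case 3
        then have "\<not> (c > 0 \<and> d > 0) \<and> \<not> (c < 0 \<and> d < 0)" using s1 s2 by blast
        then have "ff c d = 0" unfolding ff_cases by auto
        moreover have "ff a b = 0" using 3 unfolding ff_cases by auto
        ultimately show ?thesis by simp
      qed
    qed
    moreover have "D i * B i j = - (D j * B j i)" using skewD_app[OF sk i j] .
    moreover have "mut k B i j = B i j + ff a b" using False by (simp add: mut_ff a_b_c_d_def)
    moreover have "mut k B j i = B j i + ff c d" using False by (simp add: mut_ff a_b_c_d_def)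
    ultimately show ?thesis by (simp add: distrib_left)
  qed
qed


lemma skew_fold:
  assumes pos: "\<forall>i\<in>Q0. D i > 0"
  shows "set ks \<subseteq> Q0 \<Longrightarrow> skewD Q0 D B \<Longrightarrow> skewD Q0 D (fold mut ks B)"
proof (induction ks arbitrary: B)
  case Nil then show ?case by simp
next
  case (Cons k ks)
  then have "skewD Q0 D (mut k B)" using skew_mut[OF pos] by auto
  then show ?case using Cons by simp
qed

lemma fold_mut_formula:
  assumes "distinct ks" "\<forall>k\<in>set ks. \<forall>l\<in>set ks. B k l = 0"
  shows "fold mut ks B i j = (if i \<in> set ks \<or> j \<in> set ks then - B i j
           else B i j + (\<Sum>l\<in>set ks. ff (B i l) (B l j)))"
  using assms
proof (induction ks arbitrary: B)
  case Nil then show ?case by simp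
next
  case (Cons k ks)
  define C where "C = mut k B"
  have kn: "k \<notin> set ks" using Cons.prems by simp
  have Z: "\<forall>x\<in>set (k#ks). \<forall>y\<in>set (k#ks). B x y = 0" using Cons.prems by blast
  have Cz: "\<forall>x\<in>set ks. \<forall>y\<in>set ks. C x y = 0"
  proof (intro ballI)
    fix x y assume "x \<in> set ks" "y \<in> set ks"
    then show "C x y = 0" using Z kn unfolding C_def by (auto simp: mut_ff)
  qed
  have IH: "fold mut ks C i j = (if i \<in> set ks \<or> j \<in> set ks then - C i j
           else C i j + (\<Sum>l\<in>set ks. ff (C i l) (C l j)))"
    using Cons.IH[of C] Cons.prems Cz by simp
  have eq: "fold mut (k#ks) B i j = fold mut ks C i j" by (simp add: C_def)
  show ?case
  proof (cases "i \<in> set ks \<or> j \<in> set ks")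
    case True
    then show ?thesis
    proof
      assume i: "i \<in> set ks"
      then have "i \<noteq> k" using kn by auto
      have "B i k = 0" using Z i by simp
      then have "C i j = B i j"
        using `i \<noteq> k` Z i by (cases "j = k") (auto simp: C_def mut_ff)
      then show ?thesis using eq IH i by simp
    next
      assume j: "j \<in> set ks"
      then have "j \<noteq> k" using kn by auto
      have "B k j = 0" using Z j by simp
      then have "C i j = B i j"
        using `j \<noteq> k` Z j by (cases "i = k") (auto simp: C_def mut_ff)
      then show ?thesis using eq IH j by simp
    qed
  next
    case False
    then have IH': "fold mut (k#ks) B i j = C i j + (\<Sum>l\<in>set ks. ff (C i l) (C l j))"
      using eq IH by simp
    show ?thesis
    proof (cases "i = k \<or> j = k")
      case True
      then have "(\<Sum>l\<in>set ks. ff (C i l) (C l j)) = 0"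
      proof
        assume "i = k"
        then have "\<forall>l\<in>set ks. C i l = 0" using Z kn by (auto simp: C_def mut_ff)
        then show ?thesis by simp
      next
        assume "j = k"
        then have "\<forall>l\<in>set ks. C l j = 0" using Z kn by (auto simp: C_def mut_ff)
        then show ?thesis by simp
      qed
      moreover have "C i j = - B i j" using True by (auto simp: C_def mut_ff)
      ultimately show ?thesis using IH' True by auto
    next
      case F2: False
      have "\<forall>l\<in>set ks. C i l = B i l \<and> C l j = B l j"
        using Z kn F2 by (auto simp: C_def mut_ff)
      then have s: "(\<Sum>l\<in>set ks. ff (C i l) (C l j)) = (\<Sum>l\<in>set ks. ff (B i l) (B l j))"
        by (intro sum.cong) auto
      have "C i j = B i j + ff (B i k) (B k j)" using F2 by (simp add: C_def mut_ff)
      then have "fold mut (k#ks) B i j = B i j + (ff (B i k) (B k j) + (\<Sum>l\<in>set ks. ff (B i l) (B l j)))"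
        using IH' s by simp
      also have "\<dots> = B i j + (\<Sum>l\<in>set (k#ks). ff (B i l) (B l j))"
        using kn by simp
      finally show ?thesis using False F2 by simp
    qed
  qed
qed


lemma pg_perm: "perm_group Q0 G \<Longrightarrow> g \<in> G \<Longrightarrow> g permutes Q0"
  unfolding perm_group_def by blast

lemma orbit_sub: "perm_group Q0 G \<Longrightarrow> i \<in> Q0 \<Longrightarrow> orbit G i \<subseteq> Q0"
  unfolding orbit_def using pg_perm permutes_in_image by fastforce

lemma orbit_self: "perm_group Q0 G \<Longrightarrow> i \<in> orbit G i"
  unfolding orbit_def perm_group_def by (metis id_apply image_eqI)

lemma orbit_mem_sub:
  assumes "perm_group Q0 G" "j \<in> orbit G i" shows "orbit G j \<subseteq> orbit G i"
proof
  fix x assume "x \<in> orbit G j"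
  then obtain h where h: "h \<in> G" "x = h j" unfolding orbit_def by blast
  obtain g where g: "g \<in> G" "j = g i" using assms(2) unfolding orbit_def by blast
  have "h \<circ> g \<in> G" using assms(1) h g unfolding perm_group_def by blast
  then show "x \<in> orbit G i" using h g unfolding orbit_def by (metis comp_apply image_eqI)
qed

lemma orbit_sym:
  assumes "perm_group Q0 G" "j \<in> orbit G i" shows "i \<in> orbit G j"
proof -
  obtain g where g: "g \<in> G" "j = g i" using assms(2) unfolding orbit_def by blast
  have "inv g \<in> G" using assms(1) g unfolding perm_group_def by blast
  moreover have "inv g j = i" using g permutes_inverses(2)[OF pg_perm[OF assms(1) g(1)]] by simp
  ultimately show ?thesis unfolding orbit_def by (metis image_eqI)
qed

lemma orbit_eq: "perm_group Q0 G \<Longrightarrow> j \<in> orbit G i \<Longrightarrow> orbit G j = orbit G i"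
  by (meson orbit_mem_sub orbit_sym subset_antisym)

lemma orbit_image:
  assumes "perm_group Q0 G" "g \<in> G" shows "g ` orbit G k = orbit G k"
proof
  show "g ` orbit G k \<subseteq> orbit G k"
  proof
    fix x assume "x \<in> g ` orbit G k"
    then obtain h where h: "h \<in> G" "x = g (h k)" unfolding orbit_def by blast
    have "g \<circ> h \<in> G" using assms h unfolding perm_group_def by blast
    then show "x \<in> orbit G k" using h unfolding orbit_def by (metis comp_apply image_eqI)
  qed
next
  show "orbit G k \<subseteq> g ` orbit G k"
  proof
    fix x assume "x \<in> orbit G k"
    then obtain h where h: "h \<in> G" "x = h k" unfolding orbit_def by blast
    have "inv g \<circ> h \<in> G" using assms h unfolding perm_group_def by blast
    then have "inv g (h k) \<in> orbit G k" unfolding orbit_def by (metis comp_apply image_eqI)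
    moreover have "g (inv g (h k)) = x" using h permutes_inverses(1)[OF pg_perm[OF assms]] by simp
    ultimately show "x \<in> g ` orbit G k" by (metis image_eqI)
  qed
qed

lemma orbit_card:
  assumes "finite Q0" "perm_group Q0 G" "i \<in> Q0" "j \<in> orbit G i" "j \<noteq> i"
  shows "card (orbit G i) > 1"
proof -
  have fin: "finite (orbit G i)" using orbit_sub[OF assms(2,3)] assms(1) finite_subset by blast
  have "{i, j} \<subseteq> orbit G i" using orbit_self[OF assms(2)] assms(4) by blast
  then have "card {i, j} \<le> card (orbit G i)" using fin card_mono by blast
  then show ?thesis using assms(5) by simp
qed

lemma orbit_fixed:
  assumes "finite Q0" "perm_group Q0 G" "m \<in> Q0" "\<not> card (orbit G m) > 1" "g \<in> G"
  shows "g m = m"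
proof (rule ccontr)
  assume "g m \<noteq> m"
  moreover have "g m \<in> orbit G m" using assms(5) unfolding orbit_def by blast
  ultimately show False using orbit_card[OF assms(1-3)] assms(4) by blast
qed


definition Inv :: "'a set \<Rightarrow> ('a \<Rightarrow> 'a) set \<Rightarrow> ('a \<Rightarrow> int) \<Rightarrow> 'a mat \<Rightarrow> bool" where
  "Inv Q0 G D B \<longleftrightarrow> skewD Q0 D B \<and> (\<forall>g\<in>G. is_automorphism Q0 B g) \<and>
     (\<forall>i\<in>Q0. \<forall>j\<in>orbit G i. B i j = 0)"

lemma step:
  fixes Q0 :: "'a::linorder set"
  assumes fin: "finite Q0" and pg: "perm_group Q0 G" and pos: "\<forall>i\<in>Q0. D i > 0"
    and H5: "\<forall>i\<in>Q0. \<forall>j\<in>Q0. card (orbit G i) > 1 \<and> card (orbit G j) > 1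
            \<longrightarrow> orbit G i = orbit G j"
    and inv: "Inv Q0 G D B" and k: "k \<in> Q0"
  shows "Inv Q0 G D (orbit_mut (orbit G k) B)"
proof -
  define S where "S = orbit G k"
  define ks where "ks = sorted_list_of_set S"
  have SQ: "S \<subseteq> Q0" using orbit_sub[OF pg k] S_def by simp
  have finS: "finite S" using SQ fin finite_subset by blast
  have setks: "set ks = S" "distinct ks" using finS ks_def by auto
  have sk: "skewD Q0 D B" and aut: "\<forall>g\<in>G. is_automorphism Q0 B g"
    and zo: "\<forall>i\<in>Q0. \<forall>j\<in>orbit G i. B i j = 0" using inv unfolding Inv_def by auto
  have orbS: "\<And>x. x \<in> S \<Longrightarrow> orbit G x = S" using orbit_eq[OF pg] S_def by blast
  have Z: "\<forall>x\<in>set ks. \<forall>y\<in>set ks. B x y = 0"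
    using zo orbS SQ setks(1) by blast
  define B' where "B' = orbit_mut (orbit G k) B"
  have B'eq: "B' = fold mut ks B" unfolding B'_def orbit_mut_def ks_def S_def ..
  have form: "\<And>i j. B' i j = (if i \<in> S \<or> j \<in> S then - B i j
           else B i j + (\<Sum>l\<in>S. ff (B i l) (B l j)))"
    using fold_mut_formula[OF setks(2) Z] B'eq setks(1) by simp
  have sk': "skewD Q0 D B'" using skew_fold[OF pos _ sk] SQ setks(1) B'eq by simp
  have aut': "\<forall>g\<in>G. is_automorphism Q0 B' g"
  proof
    fix g assume g: "g \<in> G"
    have gp: "g permutes Q0" using pg_perm[OF pg g] .
    have ag: "\<forall>i\<in>Q0. \<forall>j\<in>Q0. B (g i) (g j) = B i j" using aut g unfolding is_automorphism_def by blast
    have gS: "g ` S = S" using orbit_image[OF pg g] S_def by simp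
    have ginj: "inj g" using permutes_inj[OF gp] .
    have memS: "\<And>x. g x \<in> S \<longleftrightarrow> x \<in> S"
    proof -
      fix x
      have "g x \<in> g ` S \<longleftrightarrow> x \<in> S" using ginj by (simp add: inj_image_mem_iff)
      then show "g x \<in> S \<longleftrightarrow> x \<in> S" using gS by simp
    qed
    have "\<forall>i\<in>Q0. \<forall>j\<in>Q0. B' (g i) (g j) = B' i j"
    proof (intro ballI)
      fix i j assume i: "i \<in> Q0" and j: "j \<in> Q0"
      show "B' (g i) (g j) = B' i j"
      proof (cases "i \<in> S \<or> j \<in> S")
        case True
        then show ?thesis using form memS ag i j by simp
      next
        case False
        have "(\<Sum>l\<in>S. ff (B (g i) l) (B l (g j))) = (\<Sum>l\<in>g ` S. ff (B (g i) l) (B l (g j)))"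
          using gS by simp
        also have "\<dots> = (\<Sum>l\<in>S. ff (B (g i) (g l)) (B (g l) (g j)))"
          using sum.reindex[OF inj_on_subset[OF ginj subset_UNIV], of "\<lambda>l. ff (B (g i) l) (B l (g j))" S]
          by (simp add: comp_def)
        also have "\<dots> = (\<Sum>l\<in>S. ff (B i l) (B l j))"
          using ag i j SQ by (intro sum.cong) auto
        finally have "(\<Sum>l\<in>S. ff (B (g i) l) (B l (g j))) = (\<Sum>l\<in>S. ff (B i l) (B l j))" .
        then show ?thesis using form[of "g i" "g j"] form[of i j] False memS ag i j by simp
      qed
    qed
    then show "is_automorphism Q0 B' g" using gp unfolding is_automorphism_def by blast
  qed
  have zo': "\<forall>i\<in>Q0. \<forall>j\<in>orbit G i. B' i j = 0"
  proof (intro ballI)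
    fix i j assume i: "i \<in> Q0" and j: "j \<in> orbit G i"
    have jQ: "j \<in> Q0" using orbit_sub[OF pg i] j by blast
    have Bij: "B i j = 0" using zo i j by blast
    show "B' i j = 0"
    proof (cases "i \<in> S \<or> j \<in> S")
      case True
      then show ?thesis using form Bij by simp
    next
      case False
      have "\<forall>l\<in>S. ff (B i l) (B l j) = 0"
      proof
        fix l assume l: "l \<in> S"
        have lQ: "l \<in> Q0" using l SQ by blast
        show "ff (B i l) (B l j) = 0"
        proof (cases "j = i")
          case True
          show ?thesis using ff_opp[of "D i" "D l" "B i l" "B l i"] pos i lQ skewD_app[OF sk i lQ] True by simp
        next
          case ne: False
          have ci: "card (orbit G i) > 1" using orbit_card[OF fin pg i j] ne by simp
          have cl: "\<not> card (orbit G l) > 1"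
          proof
            assume "card (orbit G l) > 1"
            then have "orbit G l = orbit G i" using H5 ci i lQ by blast
            then show False using orbS[OF l] orbit_self[OF pg, of i] False by simp
          qed
          obtain g where g: "g \<in> G" "j = g i" using j unfolding orbit_def by blast
          have gl: "g l = l" using orbit_fixed[OF fin pg lQ cl g(1)] .
          have "B j l = B i l" using aut g gl i lQ unfolding is_automorphism_def by metis
          then show ?thesis using ff_opp[of "D j" "D l" "B i l" "B l j"] pos jQ lQ skewD_app[OF sk jQ lQ] by simp
        qed
      qed
      then show ?thesis using form False Bij by simp
    qed
  qed
  show ?thesis using sk' aut' zo' unfolding Inv_def B'_def by blast
qed


lemma seq:
  fixes Q0 :: "'a::linorder set"
  assumes fin: "finite Q0" and pg: "perm_group Q0 G" and pos: "\<forall>i\<in>Q0. D i > 0"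
    and H5: "\<forall>i\<in>Q0. \<forall>j\<in>Q0. card (orbit G i) > 1 \<and> card (orbit G j) > 1
            \<longrightarrow> orbit G i = orbit G j"
  shows "set is \<subseteq> Q0 \<Longrightarrow> Inv Q0 G D B \<Longrightarrow> Inv Q0 G D (orbit_mut_seq G is B)"
proof (induction "is" arbitrary: B)
  case Nil then show ?case by (simp add: orbit_mut_seq_def)
next
  case (Cons k ks)
  have "Inv Q0 G D (orbit_mut (orbit G k) B)" using step[OF fin pg pos H5 Cons.prems(2)] Cons.prems(1) by simp
  then have "Inv Q0 G D (orbit_mut_seq G ks (orbit_mut (orbit G k) B))" using Cons.IH Cons.prems(1) by simp
  then show ?case by (simp add: orbit_mut_seq_def)
qed

lemma inv_adm:
  fixes Q0 :: "'a::linorder set"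
  assumes fin: "finite Q0" and pg: "perm_group Q0 G" and pos: "\<forall>i\<in>Q0. D i > 0"
    and H5: "\<forall>i\<in>Q0. \<forall>j\<in>Q0. card (orbit G i) > 1 \<and> card (orbit G j) > 1
            \<longrightarrow> orbit G i = orbit G j"
    and inv: "Inv Q0 G D B"
  shows "admissible Q0 B G"
proof -
  have sk: "skewD Q0 D B" and aut: "\<forall>g\<in>G. is_automorphism Q0 B g"
    and zo: "\<forall>i\<in>Q0. \<forall>j\<in>orbit G i. B i j = 0" using inv unfolding Inv_def by auto
  have "\<forall>i\<in>Q0. \<forall>j\<in>orbit G i. i \<noteq> j \<longrightarrow>
        B i j \<le> 0 \<and> \<not> (\<exists>k\<in>Q0. B i k > 0 \<and> B k j > 0)"
  proof (intro ballI impI conjI)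
    fix i j assume i: "i \<in> Q0" and j: "j \<in> orbit G i" and ne: "i \<noteq> j"
    show "B i j \<le> 0" using zo i j by simp
    show "\<not> (\<exists>m\<in>Q0. B i m > 0 \<and> B m j > 0)"
    proof
      assume "\<exists>m\<in>Q0. B i m > 0 \<and> B m j > 0"
      then obtain m where m: "m \<in> Q0" "B i m > 0" "B m j > 0" by blast
      have jQ: "j \<in> Q0" using orbit_sub[OF pg i] j by blast
      have mo: "m \<notin> orbit G i" using zo i m by fastforce
      have ci: "card (orbit G i) > 1" using orbit_card[OF fin pg i j] ne by simp
      have cm: "\<not> card (orbit G m) > 1"
      proof
        assume "card (orbit G m) > 1"
        then have "orbit G m = orbit G i" using H5 ci i m(1) by blast
        then show False using orbit_self[OF pg, of m] mo by simp
      qed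
      obtain g where g: "g \<in> G" "j = g i" using j unfolding orbit_def by blast
      have gm: "g m = m" using orbit_fixed[OF fin pg m(1) cm g(1)] .
      have "B j m = B i m" using aut g gm i m(1) unfolding is_automorphism_def by metis
      then have "B j m > 0" using m by simp
      moreover have "D j * B j m = - (D m * B m j)" using skewD_app[OF sk jQ m(1)] .
      moreover have "D j > 0" "D m > 0" using pos jQ m(1) by auto
      ultimately show False using m(3) by (smt (verit) mult_pos_pos)
    qed
  qed
  then show ?thesis using aut unfolding admissible_def by blast
qed

theorem mainTheorem12:
  fixes Q0 :: "'a::linorder set" and A :: "'a mat" and G :: "('a \<Rightarrow> 'a) set"
  assumes "finite Q0"
    and "skew_symmetrizable Q0 A"
    and "perm_group Q0 G"
    and "admissible Q0 A G"
    and "\<forall>i\<in>Q0. \<forall>j\<in>Q0. card (orbit G i) > 1 \<and> card (orbit G j) > 1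
            \<longrightarrow> orbit G i = orbit G j"
  shows "stable Q0 A G"
proof -
  obtain D where pos: "\<forall>i\<in>Q0. D i > 0" and skA: "skewD Q0 D A"
    using assms(2) unfolding skew_symmetrizable_def skewD_def by blast
  have autA: "\<forall>g\<in>G. is_automorphism Q0 A g" using assms(4) unfolding admissible_def by blast
  have zoA: "\<forall>i\<in>Q0. \<forall>j\<in>orbit G i. A i j = 0"
  proof (intro ballI)
    fix i j assume i: "i \<in> Q0" and j: "j \<in> orbit G i"
    have jQ: "j \<in> Q0" using orbit_sub[OF assms(3) i] j by blast
    have Di: "D i > 0" "D j > 0" using pos i jQ by auto
    have e: "D i * A i j = - (D j * A j i)" using skewD_app[OF skA i jQ] .
    show "A i j = 0"
    proof (cases "i = j")
      case True
      then show ?thesis using e Di by simp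
    next
      case False
      have ij: "i \<in> orbit G j" using orbit_sym[OF assms(3) j] .
      have "A i j \<le> 0" using assms(4) i j False unfolding admissible_def by blast
      moreover have "A j i \<le> 0" using assms(4) jQ ij False[symmetric] unfolding admissible_def by blast
      ultimately show ?thesis using e Di
        by (smt (verit) mult_pos_neg mult_pos_pos zero_less_mult_iff mult_nonneg_nonneg)
    qed
  qed
  have invA: "Inv Q0 G D A" using skA autA zoA unfolding Inv_def by blast
  show ?thesis unfolding stable_def
  proof (intro allI impI)
    fix "is" assume "set is \<subseteq> Q0"
    then have "Inv Q0 G D (orbit_mut_seq G is A)" using seq[OF assms(1,3) pos assms(5)] invA by blast
    then show "admissible Q0 (orbit_mut_seq G is A) G" using inv_adm[OF assms(1,3) pos assms(5)] by blast
  qed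
qed

end
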